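(* Let $m\ge4$, $B^m(x)=\frac{x}{1+x^{m-2}}$, $B^m_0(x)=x$ and $B^m_j(x)=B^m(B^m_{j-1}(x))$ for $j\ge1$. For every $j\ge0$, the equation $B^m_j(x)=-1$ has at least one root $x\in\mathbb{C}$, and this root is not a root of $B^m_{j'}(x)=-1$ for any $j'\neq j$. *)

theory Defs
  imports Complex_Main
begin

definition Bm :: "nat \<Rightarrow> complex \<Rightarrow> complex" where
  "Bm m x = x / (1 + x ^ (m - 2))"

definition Bmj :: "nat \<Rightarrow> nat \<Rightarrow> complex \<Rightarrow> complex" where
  "Bmj m j = (Bm m ^^ j)"

end

theory Submission
  imports Defs "HOL-Computational_Algebra.Fundamental_Theorem_Algebra"
begin

lemma preimage:
  fixes z :: complex
  assumes "z \<noteq> 0" "n \<ge> 2"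
  shows "\<exists>y. y \<noteq> 0 \<and> y / (1 + y ^ n) = z"
proof -
  define p where "p = monom z n + [:z, -1:]"
  have dq: "degree [:z, -1:] = 1" by simp
  have dm: "degree (monom z n) = n" using assms by (simp add: degree_monom_eq)
  have "degree p = n" unfolding p_def using dq dm assms
    by (subst degree_add_eq_left) auto
  hence "\<not> constant (poly p)" using assms by (simp add: constant_degree)
  then obtain y where y: "poly p y = 0" using fundamental_theorem_of_algebra by blast
  hence eq: "z * y ^ n + z - y = 0" unfolding p_def by (simp add: poly_monom algebra_simps)
  have y0: "y \<noteq> 0" using eq assms by (auto simp: power_0_left)
  have d: "1 + y ^ n \<noteq> 0"
  proof
    assume "1 + y ^ n = 0"
    hence "z * y ^ n + z = 0" by (metis add.commute distrib_left mult.right_neutral mult_zero_right)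
    with eq y0 show False by simp
  qed
  have "y = z * (1 + y ^ n)" using eq by (simp add: algebra_simps)
  hence "y / (1 + y ^ n) = z" using d by (simp add: field_simps)
  with y0 show ?thesis by blast
qed

lemma exists_root:
  assumes "m \<ge> 4"
  shows "\<exists>x. x \<noteq> 0 \<and> Bmj m j x = -1"
proof (induction j)
  case 0
  then show ?case by (simp add: Bmj_def)
next
  case (Suc j)
  then obtain x where x: "x \<noteq> 0" "Bmj m j x = -1" by blast
  have m2: "m - 2 \<ge> 2" using assms by simp
  obtain y where y: "y \<noteq> 0" "y / (1 + y ^ (m-2)) = x"
    using preimage[OF x(1) m2] by blast
  have "Bmj m (Suc j) y = Bmj m j (Bm m y)"
    unfolding Bmj_def by (simp del: funpow.simps add: funpow_Suc_right)
  also have "Bm m y = x" using y by (simp add: Bm_def)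
  finally show ?case using x y by auto
qed

definition fr :: "nat \<Rightarrow> real \<Rightarrow> real" where
  "fr m r = r / (1 + r ^ (m - 2))"

lemma Bm_real: "Bm m (of_real r) = of_real (fr m r)"
  by (simp add: Bm_def fr_def)

lemma Bmj_real: "Bmj m k (of_real r) = of_real ((fr m ^^ k) r)"
  by (induction k) (auto simp: Bmj_def Bm_real)

lemma fr_abs:
  assumes "even m" shows "\<bar>fr m r\<bar> \<le> \<bar>r\<bar>"
proof -
  have "even (m - 2)" using assms by simp
  hence p: "r ^ (m - 2) \<ge> 0" by (rule zero_le_even_power)
  have q: "\<bar>1 + r ^ (m - 2)\<bar> = 1 + r ^ (m - 2)" using p by linarith
  have "\<bar>fr m r\<bar> = \<bar>r\<bar> / (1 + r ^ (m - 2))" unfolding fr_def abs_divide q ..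
  also have "\<dots> \<le> \<bar>r\<bar> / 1" by (rule divide_left_mono) (use p in auto)
  finally show ?thesis by simp
qed

lemma even_orbit:
  assumes "even m" "m \<ge> 4"
  shows "\<bar>(fr m ^^ Suc k) (-1)\<bar> \<le> 1/2"
proof (induction k)
  case 0
  have "even (m - 2)" using assms by simp
  hence "(-1::real) ^ (m - 2) = 1" by simp
  then show ?case by (simp add: fr_def)
next
  case (Suc k)
  have "(fr m ^^ Suc (Suc k)) (-1) = fr m ((fr m ^^ Suc k) (-1))" by simp
  moreover have "\<bar>fr m ((fr m ^^ Suc k) (-1))\<bar> \<le> \<bar>(fr m ^^ Suc k) (-1)\<bar>" by (rule fr_abs[OF assms(1)])
  ultimately show ?case using Suc by linarith
qed

lemma orbit_not:
  assumes "m \<ge> 4" "k \<ge> 1"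
  shows "Bmj m k (-1) \<noteq> -1"
proof (cases "even m")
  case True
  obtain k' where k: "k = Suc k'" using assms by (cases k) auto
  have "Bmj m k (-1) = of_real ((fr m ^^ k) (-1))"
    using Bmj_real[of m k "-1"] by simp
  moreover have "\<bar>(fr m ^^ k) (-1)\<bar> \<le> 1/2" using even_orbit[OF True assms(1)] k by simp
  ultimately show ?thesis
  proof (intro notI)
    assume a: "Bmj m k (-1) = of_real ((fr m ^^ k) (-1))" "\<bar>(fr m ^^ k) (-1)\<bar> \<le> 1/2" "Bmj m k (-1) = -1"
    hence "Re (complex_of_real ((fr m ^^ k) (-1))) = Re (-1)" by simp
    hence "(fr m ^^ k) (-1) = -1" by simp
    with a(2) show False by simp
  qed
next
  case False
  have odd2: "odd (m - 2)" using False assms by simp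
  have b1: "Bm m (-1) = 0" using odd2 by (simp add: Bm_def)
  have b0: "Bm m 0 = 0" by (simp add: Bm_def)
  have "(Bm m ^^ n) 0 = 0" for n by (induction n) (auto simp: b0)
  moreover obtain k' where k: "k = Suc k'" using assms by (cases k) auto
  ultimately have "Bmj m k (-1) = 0" by (simp del: funpow.simps add: Bmj_def funpow_Suc_right b1)
  thus ?thesis by simp
qed

theorem proposition2p11:
  fixes m :: nat
  assumes "m \<ge> 4"
  shows "\<forall>j::nat. \<exists>x::complex. Bmj m j x = -1 \<and> (\<forall>j'. j' \<noteq> j \<longrightarrow> Bmj m j' x \<noteq> -1)"
proof
  fix j
  obtain x where x: "Bmj m j x = -1" using exists_root[OF assms] by blast
  have "Bmj m j' x \<noteq> -1" if "j' \<noteq> j" for j'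
  proof
    assume h: "Bmj m j' x = -1"
    show False
    proof (cases "j' < j")
      case True
      have e: "j = (j - j') + j'" using True by simp
      have "Bmj m j x = Bmj m (j - j') (Bmj m j' x)"
        unfolding Bmj_def by (subst (1) e) (simp only: funpow_add o_apply)
      with x h orbit_not[OF assms, of "j - j'"] True show False by simp
    next
      case False
      hence lt: "j < j'" using that by simp
      have e: "j' = (j' - j) + j" using lt by simp
      have "Bmj m j' x = Bmj m (j' - j) (Bmj m j x)"
        unfolding Bmj_def by (subst (1) e) (simp only: funpow_add o_apply)
      with x h orbit_not[OF assms, of "j' - j"] lt show False by simp
    qed
  qed
  with x show "\<exists>x. Bmj m j x = -1 \<and> (\<forall>j'. j' \<noteq> j \<longrightarrow> Bmj m j' x \<noteq> -1)" by blast
qed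

end
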